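(* Let $a_1,a_2$ be nonzero integers, $\Delta:=a_1^2+4a_2$ assumed not a perfect square, $\Delta_0$ the squarefree part of $\Delta$, and $K:=\mathbb{Q}(\sqrt{\Delta})$. Let $n$ be an odd positive integer with $3\nmid n$ whenever $\Delta_0=-3$, let $d$ be a positive integer dividing $n$, and let $\zeta_n=e^{2\pi i/n}$. Then for $a\in K$: $a\in K(\zeta_n)^d$ if and only if $a\in K^d$.
   Context: For a field $F$, $F^d$ denotes the set of $d$th powers of elements of $F$. *)

theory Defs
  imports "HOL-Analysis.Analysis" "HOL-Computational_Algebra.Squarefree"
begin

definition complex_subfield :: "complex set \<Rightarrow> bool" where
  "complex_subfield S \<longleftrightarrow> 0 \<in> S \<and> 1 \<in> S \<and>
     (\<forall>x\<in>S. \<forall>y\<in>S. x + y \<in> S \<and> x - y \<in> S \<and> x * y \<in> S) \<and>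
     (\<forall>x\<in>S. x \<noteq> 0 \<longrightarrow> inverse x \<in> S)"

definition gen_field :: "complex set \<Rightarrow> complex set" where
  "gen_field X = \<Inter> {S. complex_subfield S \<and> X \<subseteq> S}"

definition dth_powers :: "complex set \<Rightarrow> nat \<Rightarrow> complex set" where
  "dth_powers F d = {b ^ d | b. b \<in> F}"

definition squarefree_part :: "int \<Rightarrow> int" where
  "squarefree_part D = (THE s. squarefree s \<and> (\<exists>m. D = s * m^2))"

end

theory Submission
  imports Defs "HOL-Computational_Algebra.Primes" "HOL-Number_Theory.Cong"
begin

lemma gen_field_subfield: "complex_subfield (gen_field X)"
  unfolding complex_subfield_def gen_field_def by auto

lemma gen_field_sub: "X \<subseteq> gen_field X"
  unfolding gen_field_def by auto

lemma gen_field_least: "complex_subfield S \<Longrightarrow> X \<subseteq> S \<Longrightarrow> gen_field X \<subseteq> S"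
  unfolding gen_field_def by auto

context fixes S assumes S: "complex_subfield S" begin

lemma sf_0: "0 \<in> S" and sf_1: "1 \<in> S"
  using S unfolding complex_subfield_def by auto

lemma sf_add: "x \<in> S \<Longrightarrow> y \<in> S \<Longrightarrow> x + y \<in> S"
  and sf_diff: "x \<in> S \<Longrightarrow> y \<in> S \<Longrightarrow> x - y \<in> S"
  and sf_mult: "x \<in> S \<Longrightarrow> y \<in> S \<Longrightarrow> x * y \<in> S"
  using S unfolding complex_subfield_def by auto

lemma sf_inverse: "x \<in> S \<Longrightarrow> inverse x \<in> S"
  using S sf_0 unfolding complex_subfield_def by (cases "x = 0") auto

lemma sf_divide: "x \<in> S \<Longrightarrow> y \<in> S \<Longrightarrow> x / y \<in> S"
  by (simp add: divide_inverse sf_mult sf_inverse)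

lemma sf_uminus: "x \<in> S \<Longrightarrow> - x \<in> S"
  using sf_diff[OF sf_0] by fastforce

lemma sf_power: "x \<in> S \<Longrightarrow> x ^ k \<in> S"
  by (induction k) (auto intro: sf_mult sf_1)

lemma sf_sum: "(\<And>i. i \<in> A \<Longrightarrow> f i \<in> S) \<Longrightarrow> sum f A \<in> S"
  by (induction A rule: infinite_finite_induct) (auto intro: sf_add sf_0)

lemma sf_of_nat: "of_nat k \<in> S"
  by (induction k) (auto intro: sf_add sf_0 sf_1)

lemma sf_of_int: "of_int k \<in> S"
proof (cases "k \<ge> 0")
  case True then show ?thesis using sf_of_nat[of "nat k"] by simp
next
  case False then show ?thesis using sf_uminus[OF sf_of_nat[of "nat (-k)"]] by simp
qed

lemma sf_of_rat: "of_rat q \<in> S"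
proof -
  obtain a b where "q = Fract a b" "b > 0" by (cases q) auto
  then have "(of_rat q :: complex) = of_int a / of_int b" by (simp add: of_rat_rat[of b a])
  then show ?thesis by (simp add: sf_divide sf_of_int)
qed

lemma sf_poly: "(\<And>i. coeff f i \<in> S) \<Longrightarrow> y \<in> S \<Longrightarrow> poly f y \<in> S"
proof (induction f)
  case 0 then show ?case by (simp add: sf_0)
next
  case (pCons c f)
  have "c \<in> S" using pCons.prems(1)[of 0] by simp
  moreover have "\<And>i. coeff f i \<in> S" using pCons.prems(1)[of "Suc _"] by simp
  ultimately show ?case using pCons by (simp add: sf_add sf_mult)
qed

end

definition w :: "nat \<Rightarrow> complex" where "w m = exp (2 * of_real pi * \<i> / of_nat m)"

lemma w_pow: "w m ^ k = exp (2 * of_real pi * \<i> * of_nat k / of_nat m)"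
  unfolding w_def exp_of_nat_mult[symmetric] by (simp add: field_simps)

lemma w_pow_eq: "m > 0 \<Longrightarrow> w m ^ j = w m ^ k \<longleftrightarrow> j mod m = k mod m"
  unfolding w_pow using complex_root_unity_eq[of m j k] by simp

lemma w_pow_eq1: "m > 0 \<Longrightarrow> w m ^ k = 1 \<longleftrightarrow> m dvd k"
  unfolding w_pow using complex_root_unity_eq_1[of m k] by simp

lemma w_root: "m > 0 \<Longrightarrow> w m ^ m = 1"
  using w_pow_eq1 by simp

lemma w_all: "m > 0 \<Longrightarrow> z ^ m = 1 \<Longrightarrow> \<exists>k. z = w m ^ k"
  using complex_roots_unity[of m] unfolding w_pow by auto

lemma w_nz: "w m \<noteq> 0" unfolding w_def by simp

lemma root_quot: fixes x y :: complex
  assumes "m > 0" "x ^ m = y ^ m" "y \<noteq> 0" shows "\<exists>k. x = w m ^ k * y"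
proof -
  have "(x / y) ^ m = 1" using assms by (simp add: power_divide)
  then obtain k where "x / y = w m ^ k" using w_all assms by blast
  then show ?thesis using assms by (auto simp: field_simps)
qed

locale kum =
  fixes K :: "complex set" and n :: nat
  assumes K: "complex_subfield K" and npos: "n > 0"
begin

abbreviation "ze \<equiv> w n"

definition KP :: "complex poly \<Rightarrow> bool" where "KP f \<longleftrightarrow> (\<forall>i. coeff f i \<in> K)"

lemma KP_0[simp]: "KP 0" unfolding KP_def using sf_0[OF K] by simp
lemma KP_const: "c \<in> K \<Longrightarrow> KP [:c:]" unfolding KP_def using sf_0[OF K] by (simp add: coeff_pCons split: nat.split)
lemma KP_1[simp]: "KP 1" using KP_const[OF sf_1[OF K]] by (simp add: one_pCons)
lemma KP_add: "KP f \<Longrightarrow> KP h \<Longrightarrow> KP (f + h)" unfolding KP_def using sf_add[OF K] by simp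
lemma KP_diff: "KP f \<Longrightarrow> KP h \<Longrightarrow> KP (f - h)" unfolding KP_def using sf_diff[OF K] by simp
lemma KP_mult: "KP f \<Longrightarrow> KP h \<Longrightarrow> KP (f * h)" unfolding KP_def coeff_mult
  by (auto intro!: sf_sum[OF K] sf_mult[OF K])
lemma KP_smult: "c \<in> K \<Longrightarrow> KP f \<Longrightarrow> KP (smult c f)" unfolding KP_def using sf_mult[OF K] by simp
lemma KP_monom: "c \<in> K \<Longrightarrow> KP (monom c k)" unfolding KP_def using sf_0[OF K] by (simp add: coeff_monom)
lemma KP_pCons: "KP (pCons c f) \<longleftrightarrow> c \<in> K \<and> KP f"
  unfolding KP_def by (auto simp: coeff_pCons split: nat.split)
lemma KP_coeff: "KP f \<Longrightarrow> coeff f i \<in> K" unfolding KP_def by simp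

lemma KP_divmod:
  assumes "KP f" "KP h" "h \<noteq> 0"
  shows "\<exists>q r. KP q \<and> KP r \<and> f = q * h + r \<and> (r = 0 \<or> degree r < degree h)"
  using assms(1)
proof (induction "degree f" arbitrary: f rule: less_induct)
  case (less f)
  show ?case
  proof (cases "f = 0 \<or> degree f < degree h")
    case True
    then show ?thesis using less.prems by (intro exI[of _ 0] exI[of _ f]) auto
  next
    case False
    then have f0: "f \<noteq> 0" and dg: "degree h \<le> degree f" by auto
    define c where "c = lead_coeff f / lead_coeff h"
    define k where "k = degree f - degree h"
    have cK: "c \<in> K" unfolding c_def using less.prems assms(2)
      by (intro sf_divide[OF K] KP_coeff)
    have c0: "c \<noteq> 0" using f0 assms(3) by (simp add: c_def)
    define f' where "f' = f - monom c k * h"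
    have KPf': "KP f'" unfolding f'_def by (intro KP_diff KP_mult KP_monom less.prems assms cK)
    have dm: "degree (monom c k * h) = degree f"
      using c0 assms(3) dg by (simp add: degree_mult_eq degree_monom_eq k_def)
    have "lead_coeff (monom c k * h) = lead_coeff (monom c k) * lead_coeff h" by (rule lead_coeff_mult)
    then have lm: "lead_coeff (monom c k * h) = lead_coeff f"
      using assms(3) c0 by (simp add: degree_monom_eq del: lead_coeff_monom) (simp add: c_def)
    have cf: "coeff f' (degree f) = 0" unfolding f'_def using dm lm by simp
    have df: "degree f' \<le> degree f" unfolding f'_def using dm by (intro degree_diff_le) auto
    show ?thesis
    proof (cases "f' = 0")
      case True
      then show ?thesis using assms KPf' cK
        by (intro exI[of _ "monom c k"] exI[of _ 0]) (auto simp: f'_def KP_monom)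
    next
      case False
      then have "degree f' \<noteq> degree f" using cf leading_coeff_0_iff by metis
      with df have "degree f' < degree f" by simp
      from less.hyps[OF this KPf'] obtain q r where qr: "KP q" "KP r" "f' = q * h + r"
        "r = 0 \<or> degree r < degree h" by blast
      have "f = (q + monom c k) * h + r" using qr(3) unfolding f'_def by (simp add: algebra_simps)
      then show ?thesis using qr cK by (intro exI[of _ "q + monom c k"] exI[of _ r]) (auto intro: KP_add KP_monom)
    qed
  qed
qed

lemma ze_root: "ze ^ n = 1" using w_root npos .

definition xn :: "complex poly" where "xn = monom 1 n - 1"

lemma xn_KP: "KP xn" unfolding xn_def by (intro KP_diff KP_monom KP_1 sf_1[OF K])
lemma poly_xn: "poly xn z = z ^ n - 1" unfolding xn_def by (simp add: poly_monom)
lemma degree_xn: "degree xn = n"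
proof -
  have "xn = monom 1 n + (- 1)" unfolding xn_def by simp
  also have "degree \<dots> = degree (monom (1::complex) n)"
    using npos by (intro degree_add_eq_left) (simp add: degree_monom_eq)
  finally show ?thesis by (simp add: degree_monom_eq)
qed

lemma xn_nz: "xn \<noteq> 0" using degree_xn npos by auto

definition mdeg where "mdeg = (LEAST m. \<exists>f. KP f \<and> f \<noteq> 0 \<and> poly f ze = 0 \<and> degree f = m)"
definition g where "g = (SOME f. KP f \<and> f \<noteq> 0 \<and> poly f ze = 0 \<and> degree f = mdeg)"

lemma g_props: "KP g" "g \<noteq> 0" "poly g ze = 0"
  and g_min: "KP f \<Longrightarrow> f \<noteq> 0 \<Longrightarrow> poly f ze = 0 \<Longrightarrow> degree g \<le> degree f"
proof -
  have ex: "\<exists>m f. KP f \<and> f \<noteq> 0 \<and> poly f ze = 0 \<and> degree f = m"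
    using xn_KP xn_nz poly_xn ze_root by auto
  have "\<exists>f. KP f \<and> f \<noteq> 0 \<and> poly f ze = 0 \<and> degree f = mdeg"
    unfolding mdeg_def using ex by (rule LeastI_ex)
  then have gp: "KP g \<and> g \<noteq> 0 \<and> poly g ze = 0 \<and> degree g = mdeg"
    unfolding g_def by (rule someI_ex)
  then show "KP g" "g \<noteq> 0" "poly g ze = 0" by auto
  show "KP f \<Longrightarrow> f \<noteq> 0 \<Longrightarrow> poly f ze = 0 \<Longrightarrow> degree g \<le> degree f"
    using gp unfolding mdeg_def by (auto intro: Least_le)
qed

lemma g_dvd: assumes "KP f" "poly f ze = 0" shows "g dvd f"
proof -
  obtain q r where qr: "KP q" "KP r" "f = q * g + r" "r = 0 \<or> degree r < degree g"
    using KP_divmod[OF assms(1) g_props(1,2)] by blast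
  have "poly r ze = 0" using qr(3) assms(2) g_props(3) by (simp add: algebra_simps)
  then have "r = 0" using qr g_min by force
  then show ?thesis using qr(3) by simp
qed

lemma degree_g: "degree g > 0"
proof (rule ccontr)
  assume "\<not> degree g > 0"
  then obtain c where "g = [:c:]" by (metis degree_eq_zeroE neq0_conv)
  then show False using g_props(2,3) by simp
qed

definition R where "R = {z. poly g z = 0}"

lemma ze_R: "ze \<in> R" unfolding R_def using g_props by simp

lemma R_unity: "z \<in> R \<Longrightarrow> z ^ n = 1"
proof -
  assume "z \<in> R"
  obtain q where "xn = g * q" using g_dvd[OF xn_KP] poly_xn ze_root by (auto elim: dvdE)
  then show "z ^ n = 1" using \<open>z \<in> R\<close> poly_xn[of z] unfolding R_def by simp
qed

lemma card_R: "card R = degree g"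
proof -
  obtain q where q: "xn = g * q" using g_dvd[OF xn_KP] poly_xn ze_root by (auto elim: dvdE)
  have q0: "q \<noteq> 0" using q xn_nz by auto
  have dq: "n = degree g + degree q" using degree_xn q degree_mult_eq[OF g_props(2) q0] by simp
  have "{z::complex. z ^ n = 1} \<subseteq> R \<union> {z. poly q z = 0}"
  proof
    fix z :: complex assume "z \<in> {z. z ^ n = 1}"
    then have "poly xn z = 0" using poly_xn[of z] by simp
    then have "poly (g * q) z = 0" using q by simp
    then have "poly g z * poly q z = 0" by simp
    then show "z \<in> R \<union> {z. poly q z = 0}" unfolding R_def by auto
  qed
  then have "card {z::complex. z ^ n = 1} \<le> card (R \<union> {z. poly q z = 0})"
    using poly_roots_finite[OF g_props(2)] poly_roots_finite[OF q0]
    unfolding R_def by (intro card_mono finite_UnI) auto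
  then have "n \<le> card (R \<union> {z. poly q z = 0})" using card_roots_unity_eq[OF npos] by simp
  also have "\<dots> \<le> card R + card {z. poly q z = 0}" by (rule card_Un_le)
  also have "\<dots> \<le> card R + degree q" using card_poly_roots_bound[OF q0] by simp
  finally have "degree g \<le> card R" using dq by simp
  moreover have "card R \<le> degree g" unfolding R_def using card_poly_roots_bound[OF g_props(2)] .
  ultimately show ?thesis by simp
qed

end

context kum begin

definition L where "L = {poly f ze | f. KP f}"

lemma L_poly: "KP f \<Longrightarrow> poly f ze \<in> L" unfolding L_def by auto
lemma L_E: "x \<in> L \<Longrightarrow> (\<And>f. KP f \<Longrightarrow> x = poly f ze \<Longrightarrow> P) \<Longrightarrow> P" unfolding L_def by auto

lemma K_L: "K \<subseteq> L"
proof
  fix c assume "c \<in> K" then show "c \<in> L" using L_poly[OF KP_const[of c]] by simp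
qed

lemma ze_L: "ze \<in> L"
  using L_poly[OF KP_monom[OF sf_1[OF K], of 1]] by (simp add: poly_monom)

lemma L_add: "x \<in> L \<Longrightarrow> y \<in> L \<Longrightarrow> x + y \<in> L"
  unfolding L_def by clarify (metis KP_add poly_add)
lemma L_diff: "x \<in> L \<Longrightarrow> y \<in> L \<Longrightarrow> x - y \<in> L"
  unfolding L_def by clarify (metis KP_diff poly_diff)
lemma L_mult: "x \<in> L \<Longrightarrow> y \<in> L \<Longrightarrow> x * y \<in> L"
  unfolding L_def by clarify (metis KP_mult poly_mult)

lemma L_inv: assumes "x \<in> L" "x \<noteq> 0" shows "inverse x \<in> L"
proof -
  obtain f where f: "KP f" "x = poly f ze" using assms(1) by (rule L_E)
  have f0: "f \<noteq> 0" using f assms(2) by auto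
  define P where "P d \<longleftrightarrow> (\<exists>u v. KP u \<and> KP v \<and> d = u * f + v * g) \<and> d \<noteq> 0" for d
  have Pf: "P f" unfolding P_def using f0 by (intro conjI exI[of _ 1] exI[of _ 0]) auto
  define m where "m = (LEAST k. \<exists>d. P d \<and> degree d = k)"
  have ex: "\<exists>k d. P d \<and> degree d = k" using Pf by blast
  have "\<exists>d. P d \<and> degree d = m" unfolding m_def by (rule LeastI_ex[OF ex])
  then obtain d where d: "P d" "degree d = m" by blast
  have dmin: "degree d \<le> degree d'" if "P d'" for d'
  proof -
    have "m \<le> degree d'" unfolding m_def by (rule Least_le) (use that in blast)
    then show ?thesis using d(2) by simp
  qed
  obtain u v where uv: "KP u" "KP v" "d = u * f + v * g" and d0: "d \<noteq> 0" using d(1) unfolding P_def by blast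
  have KPd: "KP d" unfolding uv(3) by (intro KP_add KP_mult uv(1,2) f(1) g_props(1))
  have divs: "\<exists>q. KP q \<and> h = q * d" if h: "KP u'" "KP v'" "h = u' * f + v' * g" for h u' v'
  proof -
    have KPh: "KP h" unfolding h(3) by (intro KP_add KP_mult h(1,2) f(1) g_props(1))
    obtain q r where qr: "KP q" "KP r" "h = q * d + r" "r = 0 \<or> degree r < degree d"
      using KP_divmod[OF KPh KPd d0] by blast
    have "r = (u' - q * u) * f + (v' - q * v) * g" using qr(3) h(3) uv(3) by (simp add: algebra_simps)
    moreover have "KP (u' - q * u)" "KP (v' - q * v)" by (intro KP_diff KP_mult h uv qr)+
    ultimately have "r \<noteq> 0 \<Longrightarrow> P r" unfolding P_def by blast
    then have "r = 0" using dmin qr(4) by (metis not_le)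
    then show ?thesis using qr by auto
  qed
  obtain q1 where q1: "KP q1" "f = q1 * d" using divs[of 1 0 f] by auto
  obtain q2 where q2: "KP q2" "g = q2 * d" using divs[of 0 1 g] by auto
  have "degree d = 0"
  proof (rule ccontr)
    assume dd: "degree d \<noteq> 0"
    have "poly q2 ze * poly d ze = 0" using q2(2) g_props(3) by (metis poly_mult)
    moreover have "poly d ze \<noteq> 0" using q1(2) f assms(2) by auto
    ultimately have pq: "poly q2 ze = 0" by simp
    have q20: "q2 \<noteq> 0" using q2 g_props(2) by auto
    have "degree g = degree q2 + degree d" using q2(2) q20 d0 by (simp add: degree_mult_eq)
    then have "degree q2 < degree g" using dd by simp
    then show False using g_min[OF q2(1) q20 pq] by simp
  qed
  then obtain c where c: "d = [:c:]" by (metis degree_eq_zeroE)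
  have cK: "c \<in> K" using KP_coeff[OF KPd, of 0] c by simp
  have c0: "c \<noteq> 0" using c d0 by simp
  have "c = poly d ze" using c by simp
  also have "\<dots> = poly u ze * x" using uv(3) f g_props(3) by simp
  finally have "c = poly u ze * x" .
  then have "inverse x = poly (smult (inverse c) u) ze" using c0 assms(2) by (simp add: field_simps)
  then show ?thesis using L_poly[OF KP_smult[OF sf_inverse[OF K cK] uv(1)]] by simp
qed

lemma L_subfield: "complex_subfield L"
  unfolding complex_subfield_def using L_add L_diff L_mult L_inv K_L sf_0[OF K] sf_1[OF K] by auto

lemma L_least: assumes "complex_subfield S" "K \<subseteq> S" "ze \<in> S" shows "L \<subseteq> S"
proof
  fix x assume "x \<in> L"
  then obtain f where "KP f" "x = poly f ze" by (rule L_E)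
  then show "x \<in> S" using assms sf_poly[OF assms(1), of f ze] KP_coeff by auto
qed

lemma unity_L: "z ^ n = 1 \<Longrightarrow> z \<in> L"
  using w_all[OF npos] sf_power[OF L_subfield ze_L] by blast

lemma R_L: "z \<in> R \<Longrightarrow> z \<in> L" using R_unity unity_L by blast

definition sig :: "complex \<Rightarrow> complex \<Rightarrow> complex" where
  "sig z x = poly (SOME f. KP f \<and> x = poly f ze) z"

lemma wd: assumes "KP f" "KP h" "poly f ze = poly h ze" "z \<in> R" shows "poly f z = poly h z"
proof -
  have "g dvd f - h" using assms by (intro g_dvd KP_diff) auto
  then obtain q where "f - h = g * q" by (auto elim: dvdE)
  then have "poly (f - h) z = 0" using assms(4) unfolding R_def by simp
  then show ?thesis by simp
qed

lemma sig_poly: assumes "KP f" "z \<in> R" shows "sig z (poly f ze) = poly f z"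
proof -
  have "\<exists>h. KP h \<and> poly f ze = poly h ze" using assms by auto
  then have "KP (SOME h. KP h \<and> poly f ze = poly h ze) \<and> poly f ze = poly (SOME h. KP h \<and> poly f ze = poly h ze) ze"
    by (rule someI_ex)
  then have "poly f z = poly (SOME h. KP h \<and> poly f ze = poly h ze) z"
    using wd assms by blast
  then show ?thesis unfolding sig_def by simp
qed

lemma sig_K: "c \<in> K \<Longrightarrow> z \<in> R \<Longrightarrow> sig z c = c"
  using sig_poly[OF KP_const[of c]] by simp

lemma sig_ze: "z \<in> R \<Longrightarrow> sig z ze = z"
  using sig_poly[OF KP_monom[OF sf_1[OF K], of 1]] by (simp add: poly_monom)

lemma sig_add: "x \<in> L \<Longrightarrow> y \<in> L \<Longrightarrow> z \<in> R \<Longrightarrow> sig z (x + y) = sig z x + sig z y"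
  unfolding L_def by clarify (simp add: sig_poly KP_add flip: poly_add)
lemma sig_mult: "x \<in> L \<Longrightarrow> y \<in> L \<Longrightarrow> z \<in> R \<Longrightarrow> sig z (x * y) = sig z x * sig z y"
  unfolding L_def by clarify (simp add: sig_poly KP_mult flip: poly_mult)
lemma sig_1: "z \<in> R \<Longrightarrow> sig z 1 = 1" using sig_K sf_1[OF K] by blast

lemma sig_L: assumes "x \<in> L" "z \<in> R" shows "sig z x \<in> L"
proof -
  obtain f where f: "KP f" "x = poly f ze" using assms(1) by (rule L_E)
  have "poly f z \<in> L" using sf_poly[OF L_subfield, of f z] KP_coeff[OF f(1)] K_L R_L[OF assms(2)] by auto
  then show ?thesis using f sig_poly assms by simp
qed

lemma sig_power: "x \<in> L \<Longrightarrow> z \<in> R \<Longrightarrow> sig z (x ^ k) = sig z x ^ k"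
  by (induction k) (auto simp: sig_1 sig_mult sf_power[OF L_subfield])

lemma sig_hom_poly: assumes "KP f" "y \<in> L" "z \<in> R" shows "sig z (poly f y) = poly f (sig z y)"
  using assms(1)
proof (induction f)
  case 0 then show ?case using sig_K[OF sf_0[OF K] assms(3)] by simp
next
  case (pCons c f)
  then have cf: "c \<in> K" "KP f" using KP_pCons by auto
  have "poly f y \<in> L" using sf_poly[OF L_subfield, of f y] cf(2) KP_coeff K_L assms(2) by auto
  then show ?case using pCons cf assms K_L
    by (auto simp: sig_add sig_mult sig_K sf_mult[OF L_subfield])
qed

lemma sig_comm: assumes "x \<in> L" "z1 \<in> R" "z2 \<in> R" shows "sig z1 (sig z2 x) = sig z2 (sig z1 x)"
proof -
  obtain f where f: "KP f" "x = poly f ze" using assms(1) by (rule L_E)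
  obtain k1 where k1: "z1 = ze ^ k1" using w_all[OF npos R_unity[OF assms(2)]] by blast
  obtain k2 where k2: "z2 = ze ^ k2" using w_all[OF npos R_unity[OF assms(3)]] by blast
  have "sig z1 (sig z2 x) = sig z1 (poly f z2)" using f assms sig_poly by simp
  also have "\<dots> = poly f (sig z1 z2)" using sig_hom_poly f assms R_L by simp
  also have "sig z1 z2 = ze ^ (k1 * k2)" using k1 k2 sig_power[OF ze_L assms(2)] sig_ze[OF assms(2)]
    by (simp add: power_mult)
  finally have 1: "sig z1 (sig z2 x) = poly f (ze ^ (k1 * k2))" .
  have "sig z2 (sig z1 x) = sig z2 (poly f z1)" using f assms sig_poly by simp
  also have "\<dots> = poly f (sig z2 z1)" using sig_hom_poly f assms R_L by simp
  also have "sig z2 z1 = ze ^ (k1 * k2)" using k1 k2 sig_power[OF ze_L assms(3)] sig_ze[OF assms(3)]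
    by (simp flip: power_mult) (simp add: mult.commute)
  finally show ?thesis using 1 by simp
qed

lemma fixed_K: assumes "x \<in> L" "\<And>z. z \<in> R \<Longrightarrow> sig z x = x" shows "x \<in> K"
proof -
  obtain f where f: "KP f" "x = poly f ze" using assms(1) by (rule L_E)
  obtain q r where qr: "KP q" "KP r" "f = q * g + r" "r = 0 \<or> degree r < degree g"
    using KP_divmod[OF f(1) g_props(1,2)] by blast
  have xr: "x = poly r ze" using f qr g_props(3) by simp
  show ?thesis
  proof (cases "r = 0")
    case True then show ?thesis using xr sf_0[OF K] by simp
  next
    case False
    have "r = [:x:]"
    proof (rule poly_eqI_degree[of R])
      fix z assume "z \<in> R"
      then show "poly r z = poly [:x:] z" using assms(2)[of z] sig_poly[OF qr(2)] xr by simp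
    qed (use card_R qr(4) False degree_g in auto)
    then show ?thesis using KP_coeff[OF qr(2), of 0] by simp
  qed
qed

end

lemma nt0: fixes p r :: nat assumes "prime p" "r mod p \<noteq> 1" shows "\<not> int p dvd (int r - 1)"
proof
  assume "int p dvd (int r - 1)"
  then have "int r mod int p = 1 mod int p" by (simp add: mod_eq_dvd_iff)
  also have "1 mod int p = 1" using prime_gt_1_nat[OF assms(1)] by simp
  finally have "int (r mod p) = 1" by (simp add: zmod_int)
  then show False using assms(2) by simp
qed
lemma nt1: fixes p r j :: nat assumes "prime p" "r mod p \<noteq> 1" "(r * j) mod p = j mod p" shows "p dvd j"
proof -
  have "int (r * j) mod int p = int j mod int p" using assms(3) by (metis zmod_int)
  then have "int p dvd int r * int j - int j" by (simp add: mod_eq_dvd_iff)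
  then have "int p dvd int j * (int r - 1)" by (simp add: algebra_simps)
  moreover have "\<not> int p dvd (int r - 1)" using nt0 assms by blast
  moreover have "prime (int p)" using assms(1) by simp
  ultimately have "int p dvd int j" using prime_dvd_mult_iff by blast
  then show ?thesis by simp
qed
lemma nt2: fixes p r e :: nat assumes "prime p" "r mod p \<noteq> 1" shows "\<exists>k. (k * r + e) mod p = k mod p"
proof -
  have pp: "prime (int p)" using assms(1) by simp
  have "coprime (int p) (int r - 1)" using prime_imp_coprime[OF pp nt0[OF assms]] .
  then have "coprime (int r - 1) (int p)" by (simp add: coprime_commute)
  then obtain x where "[(int r - 1) * x = 1] (mod int p)" using cong_solve_coprime_int by blast
  then have "int p dvd (int r - 1) * x - 1" by (simp add: cong_iff_dvd_diff)
  then obtain s where s: "(int r - 1) * x - 1 = int p * s" by (auto elim: dvdE)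
  define k0 where "k0 = (- int e * x) mod int p"
  have k0: "k0 \<ge> 0" unfolding k0_def using prime_gt_0_nat[OF assms(1)] by simp
  define k where "k = nat k0"
  have ik: "int k = k0" using k0 unfolding k_def by simp
  have "k0 = - int e * x - int p * ((- int e * x) div int p)" unfolding k0_def by (simp add: minus_div_mult_eq_mod[symmetric])
  then have t: "int k = - int e * x + int p * t" if "t = - ((- int e * x) div int p)" for t using ik that by simp
  define t0 where "t0 = - ((- int e * x) div int p)"
  note t = t[OF t0_def]
  have "int (k * r + e) - int k = int k * (int r - 1) + int e" by (simp add: algebra_simps)
  also have "\<dots> = - int e * ((int r - 1) * x - 1) + int p * (t0 * (int r - 1))" unfolding t by (simp add: algebra_simps)
  also have "\<dots> = int p * (t0 * (int r - 1) - int e * s)" unfolding s by (simp add: algebra_simps)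
  finally have "int p dvd int (k * r + e) - int k" by simp
  then have "int (k * r + e) mod int p = int k mod int p" by (simp add: mod_eq_dvd_iff)
  then have "(k * r + e) mod p = k mod p" by (metis of_nat_eq_iff zmod_int)
  then show ?thesis by blast
qed

context kum begin

lemma unity_dvd_L: "m dvd n \<Longrightarrow> m > 0 \<Longrightarrow> w m \<in> L"
proof -
  assume "m dvd n" "m > 0"
  then obtain q where q: "n = m * q" by (auto elim: dvdE)
  have "w m ^ n = (w m ^ m) ^ q" unfolding q by (simp add: power_mult)
  also have "\<dots> = 1" using w_root[OF \<open>m > 0\<close>] by simp
  finally show ?thesis by (rule unity_L)
qed

lemma kummer_prime:
  assumes p: "prime p" "p dvd n" and notK: "w p \<notin> K" and aK: "a \<in> K" and bL: "b \<in> L" and ab: "b ^ p = a"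
  shows "\<exists>c\<in>K. c ^ p = a"
proof (cases "a = 0")
  case True
  then show ?thesis using sf_0[OF K] p(1) prime_gt_0_nat by (intro bexI[of _ 0]) auto
next
  case False
  have p0: "p > 0" using p(1) prime_gt_0_nat by blast
  have b0: "b \<noteq> 0" using False ab p0 by auto
  define \<omega> where "\<omega> = w p"
  have \<omega>L: "\<omega> \<in> L" unfolding \<omega>_def using unity_dvd_L p p0 by blast
  have \<omega>p: "\<omega> ^ p = 1" unfolding \<omega>_def using w_root[OF p0] .
  obtain z0 where z0: "z0 \<in> R" "sig z0 \<omega> \<noteq> \<omega>"
    using fixed_K[OF \<omega>L] notK unfolding \<omega>_def by blast
  have "sig z0 \<omega> ^ p = 1" using sig_power[OF \<omega>L z0(1), of p] \<omega>p sig_1[OF z0(1)] by simp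
  then obtain r where r: "sig z0 \<omega> = \<omega> ^ r" using w_all[OF p0] unfolding \<omega>_def by blast
  have rp: "r mod p \<noteq> 1"
  proof
    assume "r mod p = 1"
    moreover have "1 mod p = 1" using prime_gt_1_nat[OF p(1)] by simp
    ultimately have "r mod p = 1 mod p" by simp
    then have "\<omega> ^ r = \<omega> ^ 1" unfolding \<omega>_def using w_pow_eq[OF p0, of r 1] by blast
    then show False using z0(2) r by simp
  qed
  have sa: "sig z a = a" if "z \<in> R" for z using sig_K[OF aK that] .
  have "sig z0 b ^ p = sig z0 (b ^ p)" using sig_power[OF bL z0(1)] by simp
  also have "\<dots> = b ^ p" using sa[OF z0(1)] ab by simp
  finally have "sig z0 b ^ p = b ^ p" .
  then obtain e where e: "sig z0 b = \<omega> ^ e * b" using root_quot[OF p0 _ b0] unfolding \<omega>_def by blast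
  obtain k where k: "(k * r + e) mod p = k mod p" using nt2[OF p(1) rp] by blast
  define c where "c = \<omega> ^ k * b"
  have cL: "c \<in> L" unfolding c_def by (intro L_mult sf_power[OF L_subfield] \<omega>L bL)
  have c0: "c \<noteq> 0" unfolding c_def using b0 w_nz by (simp add: \<omega>_def)
  have "(\<omega> ^ k) ^ p = (\<omega> ^ p) ^ k" by (metis power_mult mult.commute)
  then have cp: "c ^ p = a" unfolding c_def using \<omega>p ab by (simp add: power_mult_distrib)
  have sc0: "sig z0 c = c"
  proof -
    have "sig z0 c = sig z0 \<omega> ^ k * sig z0 b" unfolding c_def
      using sig_mult[OF sf_power[OF L_subfield \<omega>L] bL z0(1)] sig_power[OF \<omega>L z0(1)] by simp
    also have "\<dots> = \<omega> ^ (k * r + e) * b" unfolding r e by (simp add: power_add flip: power_mult) (simp add: mult.commute)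
    also have "\<omega> ^ (k * r + e) = \<omega> ^ k" unfolding \<omega>_def using w_pow_eq[OF p0] k by blast
    finally show ?thesis unfolding c_def .
  qed
  have "sig z c = c" if z: "z \<in> R" for z
  proof -
    have "sig z c ^ p = sig z (c ^ p)" using sig_power[OF cL z] by simp
    also have "\<dots> = c ^ p" using sa[OF z] cp by simp
    finally have "sig z c ^ p = c ^ p" .
    then obtain j where j: "sig z c = \<omega> ^ j * c" using root_quot[OF p0 _ c0] unfolding \<omega>_def by blast
    have "sig z0 (sig z c) = sig z (sig z0 c)" using sig_comm[OF cL z0(1) z] .
    also have "\<dots> = \<omega> ^ j * c" using sc0 j by simp
    finally have 1: "sig z0 (sig z c) = \<omega> ^ j * c" .
    have "sig z0 (sig z c) = sig z0 (\<omega> ^ j) * sig z0 c" unfolding j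
      using sig_mult[OF sf_power[OF L_subfield \<omega>L] cL z0(1)] by simp
    also have "\<dots> = \<omega> ^ (r * j) * c" using sig_power[OF \<omega>L z0(1)] r sc0 by (simp add: power_mult)
    finally have "\<omega> ^ (r * j) = \<omega> ^ j" using 1 c0 by simp
    then have "(r * j) mod p = j mod p" unfolding \<omega>_def using w_pow_eq[OF p0] by blast
    then have "p dvd j" using nt1[OF p(1) rp] by blast
    then have "\<omega> ^ j = 1" unfolding \<omega>_def using w_pow_eq1[OF p0] by blast
    then show ?thesis using j by simp
  qed
  then have "c \<in> K" using fixed_K[OF cL] by blast
  then show ?thesis using cp by blast
qed

lemma kummer:
  assumes prK: "\<And>p. prime p \<Longrightarrow> p dvd n \<Longrightarrow> w p \<notin> K"
  shows "d dvd n \<Longrightarrow> a \<in> K \<Longrightarrow> b \<in> L \<Longrightarrow> b ^ d = a \<Longrightarrow> \<exists>c\<in>K. c ^ d = a"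
proof (induction d arbitrary: a b rule: less_induct)
  case (less d)
  have d0: "d > 0" using less.prems(1) npos by (cases d) auto
  show ?case
  proof (cases "d = 1")
    case True
    then show ?thesis using less.prems by auto
  next
    case False
    then obtain p where p: "prime p" "p dvd d" using prime_factor_nat by blast
    then obtain e where de: "d = p * e" by (auto elim: dvdE)
    have p0: "p > 0" using p(1) prime_gt_0_nat by blast
    have e0: "e > 0" using d0 de by auto
    have ed: "e < d" using de prime_gt_1_nat[OF p(1)] e0 by simp
    have pn: "p dvd n" using p(2) less.prems(1) by (rule dvd_trans)
    have en: "e dvd n" using de less.prems(1) dvd_mult_right by blast
    have beL: "b ^ e \<in> L" using sf_power[OF L_subfield less.prems(3)] .
    have "(b ^ e) ^ p = b ^ d" unfolding de by (metis power_mult mult.commute)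
    then have "(b ^ e) ^ p = a" using less.prems(4) by simp
    then obtain c1 where c1: "c1 \<in> K" "c1 ^ p = a" using kummer_prime[OF p(1) pn prK[OF p(1) pn] less.prems(2) beL] by blast
    show ?thesis
    proof (cases "b = 0")
      case True
      have "a = b ^ d" using less.prems(4) by simp
      then have "a = 0" using True d0 by simp
      moreover have "(0::complex) ^ d = 0" using d0 by simp
      ultimately show ?thesis using sf_0[OF K] by blast
    next
      case False
      have "c1 ^ p = (b ^ e) ^ p" using c1 \<open>(b ^ e) ^ p = a\<close> by simp
      moreover have "b ^ e \<noteq> 0" using False by simp
      ultimately obtain j where j: "c1 = w p ^ j * b ^ e" using root_quot[OF p0] by blast
      have "w d ^ e = w p"
      proof -
        have "w d ^ e = exp (2 * of_real pi * \<i> * of_nat e / of_nat d)" by (rule w_pow)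
        also have "\<dots> = w p" unfolding w_def de using e0 by (simp add: field_simps)
        finally show ?thesis .
      qed
      moreover have "(w d ^ j) ^ e = (w d ^ e) ^ j" by (metis power_mult mult.commute)
      ultimately have "c1 = (w d ^ j * b) ^ e" unfolding j by (simp add: power_mult_distrib)
      moreover have "w d ^ j * b \<in> L" using unity_dvd_L[OF less.prems(1) d0] less.prems(3)
        by (intro L_mult sf_power[OF L_subfield])
      ultimately have "\<exists>c\<in>K. c ^ e = c1" using less.IH[OF ed en c1(1)] by blast
      then obtain c where c: "c \<in> K" "c ^ e = c1" by blast
      have "c ^ d = (c ^ e) ^ p" unfolding de by (metis power_mult mult.commute)
      then have "c ^ d = a" using c c1 by simp
      then show ?thesis using c by blast
    qed
  qed
qed

end

lemma of_rat_complex: "(of_rat q :: complex) = of_real (of_rat q)"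
proof -
  obtain a b where ab: "quotient_of q = (a, b)" by (cases "quotient_of q")
  have q: "q = of_int a / of_int b" using quotient_of_div[OF ab] .
  show ?thesis unfolding q by (simp add: of_rat_divide)
qed

lemma rat_sq_int: fixes x :: rat and D :: int
  assumes "x ^ 2 = of_int D" shows "\<exists>m. D = m ^ 2"
proof -
  obtain a b where ab: "quotient_of x = (a, b)" by (cases "quotient_of x")
  have x: "x = of_int a / of_int b" using quotient_of_div[OF ab] .
  have b0: "b > 0" using quotient_of_denom_pos[OF ab] .
  have cop: "coprime a b" using quotient_of_coprime[OF ab] .
  have "(of_int a / of_int b :: rat) ^ 2 = of_int D" using assms x by simp
  then have "(of_int (a ^ 2) :: rat) = of_int (D * b ^ 2)" using b0 by (simp add: field_simps power2_eq_square)
  then have eq: "a ^ 2 = D * b ^ 2" by (simp only: of_int_eq_iff)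
  then have "b ^ 2 dvd a ^ 2" by simp
  moreover have "coprime (b ^ 2) (a ^ 2)" using cop by (simp add: coprime_commute)
  ultimately have "is_unit (b ^ 2)" using coprime_absorb_left by blast
  then have "is_unit b" using is_unit_power_iff[of b 2] by simp
  then have "b \<le> 1" using zdvd_imp_le[of b 1] by simp
  then have "b = 1" using b0 by simp
  then show ?thesis using eq by auto
qed

context fixes D :: int assumes nsq: "\<not> (\<exists>m::int. D = m ^ 2)" begin

definition "alpha = csqrt (of_int D)"
definition "Kset = {of_rat x + of_rat y * alpha | x y. True}"

lemma alpha_sq: "alpha ^ 2 = of_int D" unfolding alpha_def by simp

lemma Kset_subfield: "complex_subfield Kset"
proof -
  have mem: "of_rat x + of_rat y * alpha \<in> Kset" for x y unfolding Kset_def by blast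
  have 0: "0 \<in> Kset" using mem[of 0 0] by simp
  have 1: "1 \<in> Kset" using mem[of 1 0] by simp
  have add: "u + v \<in> Kset \<and> u - v \<in> Kset \<and> u * v \<in> Kset" if uv: "u \<in> Kset" "v \<in> Kset" for u v
  proof -
    obtain x1 y1 where u: "u = of_rat x1 + of_rat y1 * alpha" using uv(1) unfolding Kset_def by blast
    obtain x2 y2 where v: "v = of_rat x2 + of_rat y2 * alpha" using uv(2) unfolding Kset_def by blast
    have "u + v = of_rat (x1 + x2) + of_rat (y1 + y2) * alpha" unfolding u v by (simp add: of_rat_add algebra_simps)
    moreover have "u - v = of_rat (x1 - x2) + of_rat (y1 - y2) * alpha" unfolding u v by (simp add: of_rat_diff algebra_simps)
    moreover have "u * v = of_rat (x1 * x2 + y1 * y2 * of_int D) + of_rat (x1 * y2 + x2 * y1) * alpha"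
    proof -
      have "u * v = of_rat x1 * of_rat x2 + of_rat y1 * of_rat y2 * alpha ^ 2 + (of_rat x1 * of_rat y2 + of_rat x2 * of_rat y1) * alpha"
        unfolding u v by (simp add: algebra_simps power2_eq_square)
      then show ?thesis unfolding alpha_sq by (simp add: of_rat_add of_rat_mult)
    qed
    ultimately show ?thesis using mem by metis
  qed
  have inv: "inverse u \<in> Kset" if uK: "u \<in> Kset" "u \<noteq> 0" for u
  proof -
    obtain x y where u: "u = of_rat x + of_rat y * alpha" using uK(1) unfolding Kset_def by blast
    define N where "N = x ^ 2 - y ^ 2 * of_int D"
    have N0: "N \<noteq> 0"
    proof
      assume N: "N = 0"
      show False
      proof (cases "y = 0")
        case True
        then have "x = 0" using N unfolding N_def by simp
        then show False using uK(2) True u by simp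
      next
        case False
        then have "(x / y) ^ 2 = of_int D" using N unfolding N_def by (simp add: field_simps power2_eq_square)
        then show False using rat_sq_int nsq by blast
      qed
    qed
    have "u * (of_rat x - of_rat y * alpha) = of_rat x ^ 2 - of_rat y ^ 2 * alpha ^ 2" unfolding u
      by (simp add: algebra_simps power2_eq_square)
    also have "\<dots> = of_rat N" unfolding alpha_sq N_def by (simp add: of_rat_diff of_rat_mult of_rat_power)
    finally have uN: "u * (of_rat x - of_rat y * alpha) = of_rat N" .
    have N0': "(of_rat N :: complex) \<noteq> 0" using N0 by simp
    have "inverse u = (of_rat x - of_rat y * alpha) / of_rat N" using uN N0' uK(2)
      by (simp add: field_simps)
    also have "\<dots> = of_rat (x / N) + of_rat (- y / N) * alpha" using N0' by (simp add: of_rat_divide of_rat_minus field_simps)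
    finally show ?thesis using mem by simp
  qed
  show ?thesis unfolding complex_subfield_def using 0 1 add inv by blast
qed

lemma alpha_Kset: "alpha \<in> Kset" unfolding Kset_def by (rule CollectI, rule exI[of _ 0], rule exI[of _ 1]) simp

lemma alpha_eq: "alpha = csqrt (of_int D)" unfolding alpha_def ..

lemma Kset_mem: "z \<in> Kset \<Longrightarrow> \<exists>x y. z = of_rat x + of_rat y * alpha"
  unfolding Kset_def by blast

lemma genK_sub: "gen_field {alpha} \<subseteq> Kset"
  using gen_field_least[OF Kset_subfield] alpha_Kset by simp

end

fun Dseq :: "int \<Rightarrow> int \<Rightarrow> nat \<Rightarrow> int" where
  "Dseq r s 0 = 2"
| "Dseq r s (Suc 0) = r"
| "Dseq r s (Suc (Suc j)) = r * Dseq r s (Suc j) - s ^ 2 * Dseq r s j"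

lemma c_rec: fixes a b :: complex
  shows "a ^ Suc (Suc j) + b ^ Suc (Suc j) = (a + b) * (a ^ Suc j + b ^ Suc j) - (a * b) * (a ^ j + b ^ j)"
  by (simp add: algebra_simps)

lemma Dseq_val: fixes a b :: complex
  assumes ab: "a * b = 1" and s0: "s \<noteq> 0" and t: "a + b = of_int r / of_int s"
  shows "of_int (Dseq r s j) = of_int s ^ j * (a ^ j + b ^ j) \<and>
         of_int (Dseq r s (Suc j)) = of_int s ^ Suc j * (a ^ Suc j + b ^ Suc j)"
proof (induction j)
  case 0
  have "of_int r = of_int s * (a + b)" using t s0 by (simp add: field_simps)
  then show ?case by simp
next
  case (Suc j)
  have "of_int (Dseq r s (Suc (Suc j))) = of_int r * of_int (Dseq r s (Suc j)) - of_int s ^ 2 * of_int (Dseq r s j)"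
    by simp
  also have "\<dots> = of_int r * (of_int s ^ Suc j * (a ^ Suc j + b ^ Suc j)) - of_int s ^ 2 * (of_int s ^ j * (a ^ j + b ^ j))"
    using Suc.IH by simp
  also have "\<dots> = of_int s ^ Suc (Suc j) * ((a + b) * (a ^ Suc j + b ^ Suc j) - (a * b) * (a ^ j + b ^ j))"
    unfolding t ab using s0 by (simp add: field_simps power2_eq_square)
  also have "\<dots> = of_int s ^ Suc (Suc j) * (a ^ Suc (Suc j) + b ^ Suc (Suc j))" by (simp only: c_rec)
  finally show ?case using Suc.IH by simp
qed

lemma Dseq_mod: "s dvd Dseq r s (Suc j) - r ^ Suc j \<and> s dvd Dseq r s (Suc (Suc j)) - r ^ Suc (Suc j)"
proof (induction j)
  case 0
  have "Dseq r s (Suc (Suc 0)) - r ^ Suc (Suc 0) = s * (- s * 2)" by (simp add: power2_eq_square)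
  then show ?case by simp
next
  case (Suc j)
  have "Dseq r s (Suc (Suc (Suc j))) - r ^ Suc (Suc (Suc j)) =
        r * (Dseq r s (Suc (Suc j)) - r ^ Suc (Suc j)) - s * (s * Dseq r s (Suc j))"
    by (simp add: algebra_simps power2_eq_square)
  moreover have "s dvd r * (Dseq r s (Suc (Suc j)) - r ^ Suc (Suc j)) - s * (s * Dseq r s (Suc j))"
  proof (rule dvd_diff)
    show "s dvd r * (Dseq r s (Suc (Suc j)) - r ^ Suc (Suc j))" using conjunct2[OF Suc.IH] by (rule dvd_mult)
  qed simp
  ultimately show ?case using Suc.IH by simp
qed

lemma rat_trace_int:
  fixes \<omega> :: complex and t :: rat
  assumes p: "\<omega> ^ p = 1" "p > 0" and tr: "\<omega> + cnj \<omega> = of_rat t" and nm: "\<omega> * cnj \<omega> = 1"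
  shows "\<exists>r::int. t = of_int r"
proof -
  obtain r s where rs: "quotient_of t = (r, s)" by (cases "quotient_of t")
  have t: "t = of_int r / of_int s" using quotient_of_div[OF rs] .
  have s0: "s > 0" using quotient_of_denom_pos[OF rs] .
  have cop: "coprime r s" using quotient_of_coprime[OF rs] .
  have t': "\<omega> + cnj \<omega> = of_int r / of_int s" using tr unfolding t by (simp add: of_rat_divide)
  have "cnj \<omega> ^ p = 1" using p(1) by (metis complex_cnj_one complex_cnj_power)
  then have "of_int (Dseq r s p) = of_int s ^ p * (2::complex)"
    using conjunct1[OF Dseq_val[OF nm _ t', of p]] s0 p(1) by simp
  then have Dp: "Dseq r s p = s ^ p * 2" by (metis of_int_eq_iff of_int_mult of_int_numeral of_int_power)
  obtain q where q: "p = Suc q" using p(2) by (cases p) auto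
  have "s dvd Dseq r s p - r ^ p" using conjunct1[OF Dseq_mod[of s r q]] q by simp
  moreover have "s dvd Dseq r s p" using Dp q by simp
  ultimately have "s dvd Dseq r s p - (Dseq r s p - r ^ p)" by (rule dvd_diff[rotated])
  then have "s dvd r ^ p" by simp
  moreover have "coprime (r ^ p) s" using cop by simp
  ultimately have "is_unit s" using coprime_absorb_right[of s "r ^ p"] by blast
  then have "s = 1" using s0 zdvd_imp_le[of s 1] by simp
  then show ?thesis using t by auto
qed

lemma sqdvd3: fixes x :: int assumes "x ^ 2 dvd 3" shows "x ^ 2 = 1"
proof -
  have "x ^ 2 \<le> 3" using zdvd_imp_le[OF assms] by simp
  moreover have "x ^ 2 \<noteq> 0" using assms by auto
  moreover have "x ^ 2 \<noteq> 2" using assms by auto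
  moreover have "x ^ 2 \<noteq> 3"
  proof
    assume "x ^ 2 = 3"
    moreover have "\<bar>x\<bar> \<le> 1 \<or> \<bar>x\<bar> \<ge> 2" by linarith
    moreover have "\<bar>x\<bar> \<ge> 2 \<Longrightarrow> x ^ 2 \<ge> 4"
      using power_mono[of 2 "\<bar>x\<bar>" 2] by simp
    moreover have "\<bar>x\<bar> \<le> 1 \<Longrightarrow> x ^ 2 \<le> 1"
      using power_mono[of "\<bar>x\<bar>" 1 2] by simp
    ultimately show False by linarith
  qed
  moreover have "x ^ 2 \<ge> 0" by simp
  ultimately show ?thesis by linarith
qed

lemma sqpart3: fixes v :: int assumes v0: "v \<noteq> 0" shows "squarefree_part (- 3 * v ^ 2) = - 3"
  unfolding squarefree_part_def
proof (rule the_equality)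
  show "squarefree (- 3 :: int) \<and> (\<exists>m. - 3 * v ^ 2 = - 3 * m ^ 2)"
  proof
    show "squarefree (- 3 :: int)"
    proof (rule squarefreeI)
      fix x :: int assume "x ^ 2 dvd - 3"
      then have "x ^ 2 = 1" using sqdvd3 by simp
      then show "x dvd 1" by (metis dvd_triv_right power2_eq_square)
    qed
  qed blast
next
  fix s :: int assume "squarefree s \<and> (\<exists>m. - 3 * v ^ 2 = s * m ^ 2)"
  then obtain m where sq: "squarefree s" and eq: "- 3 * v ^ 2 = s * m ^ 2" by blast
  have m0: "m \<noteq> 0" using eq v0 by auto
  define g where "g = gcd v m"
  have g0: "g \<noteq> 0" using v0 unfolding g_def by simp
  obtain v' where v': "v = g * v'" unfolding g_def by (meson dvdE gcd_dvd1)
  obtain m' where m': "m = g * m'" unfolding g_def by (meson dvdE gcd_dvd2)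
  have "v = v' * gcd v m" "m = m' * gcd v m" using v' m' unfolding g_def by (simp_all add: mult.commute)
  then have cop: "coprime v' m'" using g0 unfolding g_def by (intro gcd_coprime) auto
  have "g ^ 2 * (- 3 * v' ^ 2) = g ^ 2 * (s * m' ^ 2)" using eq unfolding v' m' by (simp add: algebra_simps power_mult_distrib)
  moreover have "g ^ 2 \<noteq> 0" using g0 by simp
  ultimately have eq': "- 3 * v' ^ 2 = s * m' ^ 2" by (metis mult_left_cancel)
  have "m' ^ 2 dvd 3 * v' ^ 2" using eq' by (metis dvd_triv_right minus_mult_left dvd_minus_iff mult.commute)
  moreover have "coprime (m' ^ 2) (v' ^ 2)" using cop by (simp add: coprime_commute)
  ultimately have "m' ^ 2 dvd 3" using coprime_dvd_mult_left_iff by blast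
  then have "m' ^ 2 = 1" by (rule sqdvd3)
  then have s: "s = - 3 * v' ^ 2" using eq' by simp
  then have "v' ^ 2 dvd s" by simp
  then have "v' dvd 1" using sq unfolding squarefree_def by blast
  then have "v' ^ 2 = 1" by (metis one_dvd power2_eq_1_iff zdvd1_eq abs_eq_iff)
  then show "s = - 3" using s by simp
qed

lemma w_Re_Im: "m > 0 \<Longrightarrow> Re (w m) = cos (2 * pi / m) \<and> Im (w m) = sin (2 * pi / m)"
  unfolding w_def by (simp add: Re_exp Im_exp)

lemma small_cases:
  fixes \<omega> :: complex and r :: int and p :: nat
  assumes p3: "p \<ge> 3" "odd p" and wp: "\<omega> ^ p = 1" and dv: "\<And>k. \<omega> ^ k = 1 \<Longrightarrow> p dvd k"
    and q: "\<omega> ^ 2 - of_int r * \<omega> + 1 = 0" and rb: "\<bar>r\<bar> \<le> 2"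
  shows "r = -1 \<and> p = 3"
proof -
  have "r = -2 \<or> r = -1 \<or> r = 0 \<or> r = 1 \<or> r = 2" using rb by linarith
  then show ?thesis
  proof (elim disjE)
    assume r: "r = 2"
    then have "(\<omega> - 1) ^ 2 = 0" using q by (simp add: power2_eq_square algebra_simps)
    then have "\<omega> ^ 1 = 1" by simp
    then have "p dvd 1" by (rule dv)
    then show ?thesis using p3 by simp
  next
    assume r: "r = -2"
    then have "(\<omega> + 1) ^ 2 = 0" using q by (simp add: power2_eq_square algebra_simps)
    then have "\<omega> = -1" by (simp add: add_eq_0_iff2)
    then have "\<omega> ^ 2 = 1" by simp
    then have "p dvd 2" by (rule dv)
    then show ?thesis using p3 dvd_imp_le[of p 2] by simp
  next
    assume r: "r = 0"
    then have "\<omega> ^ 2 + 1 = 0" using q by simp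
    then have "\<omega> ^ 2 = -1" by (simp add: eq_neg_iff_add_eq_0)
    then have "\<omega> ^ 4 = 1" by (metis power_mult numeral_Bit0 mult_2 power_add neg_one_power_add_eq_neg_one_power_diff power2_minus power_one)
    then have "p dvd 4" by (rule dv)
    then have "p \<le> 4" using dvd_imp_le[of p 4] by simp
    then have "p = 3" using p3 by presburger
    then show ?thesis using \<open>p dvd 4\<close> by simp
  next
    assume r: "r = 1"
    then have w2: "\<omega> ^ 2 = \<omega> - 1" using q by (simp add: algebra_simps)
    have w3: "\<omega> ^ 3 = -1"
    proof -
      have "\<omega> ^ 3 = \<omega> * \<omega> ^ 2" by (simp add: power_numeral_reduce)
      also have "\<dots> = \<omega> * (\<omega> - 1)" using w2 by simp
      also have "\<dots> = \<omega> ^ 2 - \<omega>" by (simp add: algebra_simps power2_eq_square)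
      finally show ?thesis using w2 by simp
    qed
    then have "\<omega> ^ 6 = 1" using power_mult[of \<omega> 3 2] by simp
    then have "p dvd 6" by (rule dv)
    then have "p \<le> 6" using dvd_imp_le[of p 6] by simp
    then have "p = 3 \<or> p = 5" using p3 by presburger
    then have "p = 3" using \<open>p dvd 6\<close> by auto
    then have "\<omega> ^ 3 = 1" using wp by simp
    then show ?thesis using w3 by simp
  next
    assume r: "r = -1"
    then have w2: "\<omega> ^ 2 = - \<omega> - 1" using q by (simp add: algebra_simps add_eq_0_iff2)
    have "\<omega> ^ 3 = \<omega> * \<omega> ^ 2" by (simp add: power_numeral_reduce)
    also have "\<dots> = \<omega> * (- \<omega> - 1)" using w2 by simp
    also have "\<dots> = - (\<omega> ^ 2) - \<omega>" by (simp add: algebra_simps power2_eq_square)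
    also have "\<dots> = 1" using w2 by simp
    finally have "p dvd 3" by (rule dv)
    then have "p \<le> 3" using dvd_imp_le[of p 3] by simp
    then show ?thesis using p3 r by simp
  qed
qed


lemma unity_in_K:
  fixes D :: int and p :: nat
  assumes nsq: "\<not> (\<exists>m::int. D = m ^ 2)" and p: "prime p" "odd p" and wK: "w p \<in> Kset D"
  shows "p = 3 \<and> (\<exists>v. v \<noteq> 0 \<and> D = - 3 * v ^ 2)"
proof -
  have p3: "p \<ge> 3" using p prime_ge_2_nat[OF p(1)] by (cases "p = 2") auto
  have p0: "p > 0" using p3 by simp
  define \<omega> where "\<omega> = w p"
  obtain x y where xy: "\<omega> = of_rat x + of_rat y * alpha D" using Kset_mem[OF nsq wK] unfolding \<omega>_def by blast
  have ReIm: "Re \<omega> = cos (2 * pi / p)" "Im \<omega> = sin (2 * pi / p)" using w_Re_Im[OF p0] unfolding \<omega>_def by auto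
  have Impos: "Im \<omega> > 0" unfolding ReIm using p3 by (intro sin_gt_zero) (auto simp: field_simps)
  have nrm: "cmod \<omega> = 1" unfolding \<omega>_def w_def by simp
  have D0: "D \<noteq> 0" using nsq by auto
  have wp: "\<omega> ^ p = 1" unfolding \<omega>_def using w_root[OF p0] .
  have dv: "\<omega> ^ k = 1 \<Longrightarrow> p dvd k" for k unfolding \<omega>_def using w_pow_eq1[OF p0] by blast
  show ?thesis
  proof (cases "D > 0")
    case True
    have "alpha D = of_real (sqrt (of_int D))" unfolding alpha_eq[OF nsq] using True by simp
    then have "Im \<omega> = 0" unfolding xy by (simp add: of_rat_complex)
    then show ?thesis using Impos by simp
  next
    case False
    then have Dn: "D < 0" using D0 by simp
    define sD where "sD = sqrt (of_int (- D))"
    have sD: "sD ^ 2 = of_int (- D)" unfolding sD_def using Dn by simp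
    have "alpha D = \<i> * of_real sD" unfolding alpha_eq[OF nsq] sD_def using Dn by simp
    then have Re: "Re \<omega> = of_rat x" and Im: "Im \<omega> = of_rat y * sD" unfolding xy by (simp_all add: of_rat_complex)
    have tr: "\<omega> + cnj \<omega> = of_rat (2 * x)" unfolding complex_add_cnj Re by (simp add: of_rat_complex of_rat_mult)
    have nm: "\<omega> * cnj \<omega> = 1" unfolding complex_mult_cnj cmod_power2[symmetric] nrm by simp
    obtain r :: int where r: "2 * x = of_int r" using rat_trace_int[OF wp p0 tr nm] by blast
    have Rer: "Re \<omega> = of_int r / 2" using r unfolding Re by (metis of_rat_of_int_eq of_rat_mult of_rat_numeral_eq nonzero_mult_div_cancel_left zero_neq_numeral)
    have "\<bar>Re \<omega>\<bar> \<le> 1" using abs_Re_le_cmod[of \<omega>] nrm by simp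
    then have rb: "\<bar>r\<bar> \<le> 2" unfolding Rer by simp
    have "\<omega> ^ 2 - (\<omega> + cnj \<omega>) * \<omega> + \<omega> * cnj \<omega> = 0" by (simp add: algebra_simps power2_eq_square)
    moreover have "\<omega> + cnj \<omega> = of_int r" unfolding tr r by simp
    ultimately have q: "\<omega> ^ 2 - of_int r * \<omega> + 1 = 0" using nm by simp
    have r3: "r = -1" "p = 3" using small_cases[OF p3 p(2) wp dv q rb] by auto
    have "(Re \<omega>) ^ 2 + (Im \<omega>) ^ 2 = 1" using cmod_power2[of \<omega>] nrm by simp
    then have h: "(1 / 2) ^ 2 + (of_rat y * sD) ^ 2 = (1::real)" unfolding Rer Im r3 by simp
    have "(1 / 2) ^ 2 = (1 / 4 :: real)" by (simp add: power2_eq_square)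
    then have "(of_rat y * sD) ^ 2 = 3 / 4" using h by linarith
    then have "(of_rat y) ^ 2 * of_int (- D) = (3 / 4 :: real)" using sD by (simp add: power_mult_distrib)
    then have "of_rat ((2 * y) ^ 2 * of_int (- D)) = (of_rat 3 :: real)"
      by (simp add: of_rat_mult of_rat_power of_rat_minus power_mult_distrib algebra_simps)
    then have eqr: "(2 * y) ^ 2 * of_int (- D) = 3" by (simp only: of_rat_eq_iff)
    obtain u v where uv: "quotient_of (2 * y) = (u, v)" by (cases "quotient_of (2 * y)")
    have yv: "2 * y = of_int u / of_int v" using quotient_of_div[OF uv] .
    have v0: "v > 0" using quotient_of_denom_pos[OF uv] .
    have cop: "coprime u v" using quotient_of_coprime[OF uv] .
    have "(of_int u / of_int v) ^ 2 * of_int (- D) = (3 :: rat)" using eqr yv by simp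
    then have "of_int (u ^ 2 * (- D)) = (of_int (3 * v ^ 2) :: rat)" using v0 by (simp add: field_simps power2_eq_square)
    then have eqi: "u ^ 2 * (- D) = 3 * v ^ 2" by (simp only: of_int_eq_iff)
    then have "u ^ 2 dvd 3 * v ^ 2" by (metis dvd_triv_left)
    moreover have "coprime (u ^ 2) (v ^ 2)" using cop by simp
    ultimately have "u ^ 2 dvd 3" using coprime_dvd_mult_left_iff by blast
    then have "u ^ 2 = 1" by (rule sqdvd3)
    then have "D = - 3 * v ^ 2" using eqi by simp
    moreover have "v \<noteq> 0" using v0 by simp
    ultimately show ?thesis using r3 by blast
  qed
qed


theorem lemma5p4:
  fixes a1 a2 :: int and n d :: nat and a :: complex
  assumes "a1 \<noteq> 0" and "a2 \<noteq> 0"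
    and "\<not> (\<exists>m::int. a1^2 + 4 * a2 = m^2)"
    and "odd n" and "n > 0"
    and "squarefree_part (a1^2 + 4 * a2) = -3 \<Longrightarrow> \<not> (3 dvd n)"
    and "d > 0" and "d dvd n"
    and "a \<in> gen_field {csqrt (of_int (a1^2 + 4 * a2))}"
  shows "a \<in> dth_powers (gen_field {csqrt (of_int (a1^2 + 4 * a2)), exp (2 * pi * \<i> / of_nat n)}) d
     \<longleftrightarrow> a \<in> dth_powers (gen_field {csqrt (of_int (a1^2 + 4 * a2))}) d"
proof -
  define \<Delta> where "\<Delta> = a1^2 + 4 * a2"
  have nsq: "\<not> (\<exists>m::int. \<Delta> = m ^ 2)" using assms(3) unfolding \<Delta>_def .
  define K where "K = gen_field {csqrt (of_int \<Delta>)}"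
  have ex: "exp (2 * pi * \<i> / of_nat n) = w n" unfolding w_def by simp
  have KI: "kum K n" unfolding K_def using gen_field_subfield assms(5) by unfold_locales auto
  define L where "L = kum.L K n"
  have \<alpha>K: "csqrt (of_int \<Delta>) \<in> K" unfolding K_def using gen_field_sub[of "{csqrt (of_int \<Delta>)}"] by simp
  have Lgen: "gen_field {csqrt (of_int \<Delta>), w n} = L"
  proof
    have KL: "K \<subseteq> L" using kum.K_L[OF KI] unfolding L_def .
    have zL: "w n \<in> L" using kum.ze_L[OF KI] unfolding L_def .
    have LS: "complex_subfield L" using kum.L_subfield[OF KI] unfolding L_def .
    show "gen_field {csqrt (of_int \<Delta>), w n} \<subseteq> L"
      by (rule gen_field_least[OF LS]) (use KL zL \<alpha>K in blast)
    have G: "complex_subfield (gen_field {csqrt (of_int \<Delta>), w n})" by (rule gen_field_subfield)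
    have sub: "{csqrt (of_int \<Delta>), w n} \<subseteq> gen_field {csqrt (of_int \<Delta>), w n}" by (rule gen_field_sub)
    have "K \<subseteq> gen_field {csqrt (of_int \<Delta>), w n}" unfolding K_def
      by (rule gen_field_least[OF G]) (use sub in blast)
    moreover have "w n \<in> gen_field {csqrt (of_int \<Delta>), w n}" using sub by blast
    ultimately show "L \<subseteq> gen_field {csqrt (of_int \<Delta>), w n}"
      unfolding L_def by (rule kum.L_least[OF KI G])
  qed
  have prK: "w p \<notin> K" if p: "prime p" "p dvd n" for p
  proof
    assume wK: "w p \<in> K"
    have op: "odd p"
    proof
      assume "even p"
      then have "2 dvd n" using p(2) by (rule dvd_trans)
      then show False using assms(4) by simp
    qed
    have "K \<subseteq> Kset \<Delta>" unfolding K_def using genK_sub[OF nsq] alpha_eq[OF nsq] by simp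
    then have "w p \<in> Kset \<Delta>" using wK by blast
    then obtain v where v: "p = 3" "v \<noteq> 0" "\<Delta> = - 3 * v ^ 2" using unity_in_K[OF nsq p(1) op] by blast
    then have "squarefree_part \<Delta> = - 3" using sqpart3 by simp
    then have "\<not> 3 dvd n" using assms(6) unfolding \<Delta>_def by blast
    then show False using p(2) v(1) by simp
  qed
  have aK: "a \<in> K" using assms(9) unfolding K_def \<Delta>_def .
  show ?thesis
    unfolding ex \<Delta>_def[symmetric] K_def[symmetric] Lgen dth_powers_def
  proof
    assume "a \<in> {b ^ d |b. b \<in> L}"
    then obtain b where "b \<in> L" "a = b ^ d" by blast
    then have "\<exists>c\<in>K. c ^ d = a" using kum.kummer[OF KI prK assms(8) aK, of b] unfolding L_def by simp
    then obtain c where "c \<in> K" "c ^ d = a" by blast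
    then show "a \<in> {b ^ d |b. b \<in> K}" by blast
  next
    assume "a \<in> {b ^ d |b. b \<in> K}"
    then show "a \<in> {b ^ d |b. b \<in> L}" using kum.K_L[OF KI] unfolding L_def by blast
  qed
qed

end
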